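(* For every sequence $(h_n)_{n\in\mathbb{N}}$ monotonically decreasing to zero satisfying Assumption (A) of the context, there exists a subsequence, still denoted $(h_n)_{n\in\mathbb{N}}$, such that for each $m\in L^2(\Omega;\mathbb{R}^3)$ there exists $(\vartheta_n(m))_{n\in\mathbb{N}}\subset W^{1,2}(\Omega;\mathbb{R}^3)$ satisfying (a) $(\vartheta_{n,1}(m),h_n\vartheta_{n,2}(m),h_n\vartheta_{n,3}(m))\to0$ and $\int_\omega x_3\vartheta_{n,2}(m)\,dx_2dx_3\to0$ strongly in $L^2$; (b) $K(m,[0,L])=\lim_{n\to\infty}\int_\Omega Q^{h_n}(x,\iota(m)+\nabla_{h_n}\vartheta_n(m))\,dx$.
   Context: $L>0$; $\omega\subset\mathbb{R}^2$ bounded open connected with Lipschitz boundary, $\int_\omega x_2=\int_\omega x_3=\int_\omega x_2x_3=0$; $\Omega=[0,L]\times\omega$. $\nabla_h u=(\partial_1u\,|\,\tfrac1h\partial_2u\,|\,\tfrac1h\partial_3u)$; $\iota(m)=\sum_{i=1}^3m_ie_i\otimes e_1$. Material: for $0<\eta_1\le\eta_2$, $\rho>0$, $\mathcal W(\eta_1,\eta_2,\rho)$ is the class of measurable $W:\mathbb{M}^3\to[0,+\infty]$ with $W(RF)=W(F)$ ($R\in SO(3)$), $W(F)\ge\eta_1\mathrm{dist}^2(F,SO(3))$, $W(F)\le\eta_2\mathrm{dist}^2(F,SO(3))$ when $\mathrm{dist}^2(F,SO(3))\le\rho$, $W(I)=0$, $W(I+G)=Q(G)+o(|G|^2)$ with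 $Q$ quadratic. $(W^h)_{h>0}$, $W^h:\Omega\times\mathbb{M}^3\to[0,+\infty]$, is an admissible composite material: each $W^h$ a.e. equal to a Borel function, $W^h(x,\cdot)\in\mathcal W(\eta_1,\eta_2,\rho)$ for all $h$ and a.e. $x$, and for a monotone $r$ with $r(\delta)\to0$, $\limsup_{h\to0}|W^h(x,I+G)-Q^h(x,G)|\le r(|G|)|G|^2$ for a.e. $x$ and all $G$, where $Q^h(x,G)=\lim_{\varepsilon\to0}\varepsilon^{-2}W^h(x,I+\varepsilon G)$. For open $O\subset[0,L]$, $m\in L^2(\Omega;\mathbb{R}^3)$ and $(h_n)$ decreasing to $0$: $K^-_{(h_n)}(m,O)$ (resp. $K^+_{(h_n)}(m,O)$) is the infimum of $\liminf_n$ (resp. $\limsup_n$) of $\int_{O\times\omega}Q^{h_n}(x,\iota(m)+\nabla_{h_n}\psi^{h_n})dx$ over all sequences $\psi^{h_n}\in W^{1,2}(O\times\omega;\mathbb{R}^3)$ with $(\psi^{h_n}_1,h_n\psi^{h_n}_2,h_n\psi^{h_n}_3)\to0$ strongly in $L^2(O\times\omega)$ and $\int_\omega x_3\psi^{h_n}_2\to0$ strongly in $L^2(O)$. $\mathcal D$ is a fixed countable family of open subsets of $[0,L]$, each a finite union of open intervals, dense in the open subsets of $[0,L]$ (for open $A,B$ with $\bar A$ compact in $B$ there is $D\in\mathcal D$ with $\bar A\subset D$, $\bar D\subset B$). Assumption (A) on $(h_n)$: $K^+_{(h_n)}(m,D)=K^-_{(h_n)}(m,D)$ for all $m\in L^2(\Omega;\mathbb{R}^3)$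 and all $D\in\mathcal D$. Under (A) one has $K^+_{(h_n)}(m,O)=K^-_{(h_n)}(m,O)=:K(m,O)$ for every open $O\subset[0,L]$. *)

theory Defs
  imports "HOL-Analysis.Analysis"
begin

definition pt3 :: "real \<Rightarrow> real^2 \<Rightarrow> real^3" where
  "pt3 t y = vector [t, y $ 1, y $ 2]"

definition xsec :: "real^3 \<Rightarrow> real^2" where
  "xsec x = vector [x $ 2, x $ 3]"

definition cyl :: "real set \<Rightarrow> (real^2) set \<Rightarrow> (real^3) set" where
  "cyl S \<omega> = {x. x $ 1 \<in> S \<and> xsec x \<in> \<omega>}"

definition lipschitz_boundary :: "(real^2) set \<Rightarrow> bool" where
  "lipschitz_boundary U \<longleftrightarrow>
     (\<forall>p\<in>frontier U. \<exists>r>0. \<exists>R::real^2^2. \<exists>\<gamma>::real\<Rightarrow>real. \<exists>C.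
        rotation_matrix R \<and> C-lipschitz_on UNIV \<gamma> \<and>
        U \<inter> ball p r = {y\<in>ball p r. (R *v (y - p)) $ 2 > \<gamma> ((R *v (y - p)) $ 1)})"

definition SO3 :: "(real^3^3) set" where
  "SO3 = {R. rotation_matrix R}"

definition quadratic_form :: "(real^3^3 \<Rightarrow> real) \<Rightarrow> bool" where
  "quadratic_form Q \<longleftrightarrow> (\<exists>B. bilinear B \<and> (\<forall>G. Q G = B G G))"

definition matclass :: "real \<Rightarrow> real \<Rightarrow> real \<Rightarrow> (real^3^3 \<Rightarrow> ennreal) \<Rightarrow> bool" where
  "matclass \<eta>1 \<eta>2 \<rho> W \<longleftrightarrow>
     W \<in> borel_measurable borel \<and>
     (\<forall>R F. R \<in> SO3 \<longrightarrow> W (R ** F) = W F) \<and>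
     (\<forall>F. W F \<ge> ennreal (\<eta>1 * (infdist F SO3)\<^sup>2)) \<and>
     (\<forall>F. (infdist F SO3)\<^sup>2 \<le> \<rho> \<longrightarrow> W F \<le> ennreal (\<eta>2 * (infdist F SO3)\<^sup>2)) \<and>
     W (mat 1) = 0 \<and>
     (\<exists>Q. quadratic_form Q \<and>
        (\<forall>e>0. \<exists>d>0. \<forall>G. norm G < d \<longrightarrow>
            W (mat 1 + G) < \<infinity> \<and> \<bar>enn2real (W (mat 1 + G)) - Q G\<bar> \<le> e * (norm G)\<^sup>2))"

definition Qh :: "(real \<Rightarrow> real^3 \<Rightarrow> real^3^3 \<Rightarrow> ennreal) \<Rightarrow> real \<Rightarrow> real^3 \<Rightarrow> real^3^3 \<Rightarrow> real" where
  "Qh W h x G = Lim (at (0::real)) (\<lambda>\<epsilon>. enn2real (W h x (mat 1 + \<epsilon> *\<^sub>R G)) / \<epsilon>\<^sup>2)"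

definition admissible_material ::
  "real \<Rightarrow> real \<Rightarrow> real \<Rightarrow> (real^3) set \<Rightarrow> (real \<Rightarrow> real^3 \<Rightarrow> real^3^3 \<Rightarrow> ennreal) \<Rightarrow> bool" where
  "admissible_material \<eta>1 \<eta>2 \<rho> \<Omega> W \<longleftrightarrow>
     (\<forall>h>0. \<exists>g :: (real^3) \<times> (real^3^3) \<Rightarrow> ennreal. g \<in> borel_measurable borel \<and>
        (AE p in lborel. p \<in> \<Omega> \<times> UNIV \<longrightarrow> W h (fst p) (snd p) = g p)) \<and>
     (\<forall>h>0. AE x in lebesgue. x \<in> \<Omega> \<longrightarrow> matclass \<eta>1 \<eta>2 \<rho> (W h x)) \<and>
     (\<exists>r::real \<Rightarrow> real. mono_on {0..} r \<and> (r \<longlongrightarrow> 0) (at_right 0) \<and>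
        (AE x in lebesgue. x \<in> \<Omega> \<longrightarrow>
           (\<forall>G. Limsup (at_right 0)
                   (\<lambda>h. \<bar>enn2ereal (W h x (mat 1 + G)) - ereal (Qh W h x G)\<bar>)
                 \<le> ereal (r (norm G) * (norm G)\<^sup>2))))"

definition L2 :: "(real^3) set \<Rightarrow> (real^3 \<Rightarrow> 'b::real_normed_vector) \<Rightarrow> bool" where
  "L2 U f \<longleftrightarrow> f \<in> borel_measurable (lebesgue_on U) \<and>
               integrable (lebesgue_on U) (\<lambda>x. (norm (f x))\<^sup>2)"

definition pdiff :: "3 \<Rightarrow> (real^3 \<Rightarrow> real) \<Rightarrow> real^3 \<Rightarrow> real" where
  "pdiff j f x = deriv (\<lambda>t. f (x + t *\<^sub>R axis j 1)) 0"

fun iter_pdiff :: "3 list \<Rightarrow> (real^3 \<Rightarrow> real) \<Rightarrow> real^3 \<Rightarrow> real" where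
  "iter_pdiff [] f = f"
| "iter_pdiff (j # js) f = pdiff j (iter_pdiff js f)"

definition smooth3 :: "(real^3 \<Rightarrow> real) \<Rightarrow> bool" where
  "smooth3 f \<longleftrightarrow> (\<forall>js. continuous_on UNIV (iter_pdiff js f) \<and>
      (\<forall>j x. (\<lambda>t. iter_pdiff js f (x + t *\<^sub>R axis j 1)) differentiable (at 0)))"

definition test_fun :: "(real^3) set \<Rightarrow> (real^3 \<Rightarrow> real) \<Rightarrow> bool" where
  "test_fun U \<phi> \<longleftrightarrow> smooth3 \<phi> \<and> compact (closure {x. \<phi> x \<noteq> 0}) \<and>
                      closure {x. \<phi> x \<noteq> 0} \<subseteq> U"

text \<open>u belongs to W^{1,2}(U;R^3) with weak Jacobian Du (Du x $ i $ j = d_j u_i);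
  derivatives are taken in the interior of U.\<close>
definition W12 :: "(real^3) set \<Rightarrow> (real^3 \<Rightarrow> real^3) \<Rightarrow> (real^3 \<Rightarrow> real^3^3) \<Rightarrow> bool" where
  "W12 U u Du \<longleftrightarrow> L2 U u \<and> L2 U Du \<and>
     (\<forall>\<phi>. test_fun (interior U) \<phi> \<longrightarrow> (\<forall>i j.
        integral\<^sup>L (lebesgue_on U) (\<lambda>x. u x $ i * pdiff j \<phi> x) =
        - integral\<^sup>L (lebesgue_on U) (\<lambda>x. Du x $ i $ j * \<phi> x)))"

definition grad_h :: "real \<Rightarrow> real^3^3 \<Rightarrow> real^3^3" where
  "grad_h h D = (\<chi> i j. if j = 1 then D $ i $ j else D $ i $ j / h)"

definition iota :: "real^3 \<Rightarrow> real^3^3" where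
  "iota m = (\<chi> i j. if j = 1 then m $ i else 0)"

definition scale23 :: "real \<Rightarrow> real^3 \<Rightarrow> real^3" where
  "scale23 h v = vector [v $ 1, h * v $ 2, h * v $ 3]"

definition adm_seq :: "(real^2) set \<Rightarrow> real set \<Rightarrow> (nat \<Rightarrow> real)
      \<Rightarrow> (nat \<Rightarrow> real^3 \<Rightarrow> real^3) \<Rightarrow> (nat \<Rightarrow> real^3 \<Rightarrow> real^3^3) \<Rightarrow> bool" where
  "adm_seq \<omega> S h \<psi> D\<psi> \<longleftrightarrow>
     (\<forall>n. W12 (cyl S \<omega>) (\<psi> n) (D\<psi> n)) \<and>
     ((\<lambda>n. \<integral>\<^sup>+ x \<in> cyl S \<omega>. ennreal ((norm (scale23 (h n) (\<psi> n x)))\<^sup>2) \<partial>lebesgue)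
        \<longlonglongrightarrow> 0) \<and>
     ((\<lambda>n. \<integral>\<^sup>+ t \<in> S. ennreal ((integral\<^sup>L (lebesgue_on \<omega>) (\<lambda>y. y $ 2 * \<psi> n (pt3 t y) $ 2))\<^sup>2) \<partial>lebesgue)
        \<longlonglongrightarrow> 0)"

definition energy :: "(real \<Rightarrow> real^3 \<Rightarrow> real^3^3 \<Rightarrow> ennreal) \<Rightarrow> (real^2) set \<Rightarrow> real set
      \<Rightarrow> real \<Rightarrow> (real^3 \<Rightarrow> real^3) \<Rightarrow> (real^3 \<Rightarrow> real^3^3) \<Rightarrow> ennreal" where
  "energy W \<omega> S h m D\<psi> =
     (\<integral>\<^sup>+ x \<in> cyl S \<omega>. ennreal (Qh W h x (iota (m x) + grad_h h (D\<psi> x))) \<partial>lebesgue)"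

definition Kminus :: "(real \<Rightarrow> real^3 \<Rightarrow> real^3^3 \<Rightarrow> ennreal) \<Rightarrow> (real^2) set
      \<Rightarrow> (nat \<Rightarrow> real) \<Rightarrow> (real^3 \<Rightarrow> real^3) \<Rightarrow> real set \<Rightarrow> ennreal" where
  "Kminus W \<omega> h m S = (INF p \<in> {(\<psi>, D\<psi>). adm_seq \<omega> S h \<psi> D\<psi>}.
       liminf (\<lambda>n. energy W \<omega> S (h n) m (snd p n)))"

definition Kplus :: "(real \<Rightarrow> real^3 \<Rightarrow> real^3^3 \<Rightarrow> ennreal) \<Rightarrow> (real^2) set
      \<Rightarrow> (nat \<Rightarrow> real) \<Rightarrow> (real^3 \<Rightarrow> real^3) \<Rightarrow> real set \<Rightarrow> ennreal" where
  "Kplus W \<omega> h m S = (INF p \<in> {(\<psi>, D\<psi>). adm_seq \<omega> S h \<psi> D\<psi>}.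
       limsup (\<lambda>n. energy W \<omega> S (h n) m (snd p n)))"

definition dense_family :: "real \<Rightarrow> real set set \<Rightarrow> bool" where
  "dense_family L \<D> \<longleftrightarrow> countable \<D> \<and>
     (\<forall>D\<in>\<D>. openin (top_of_set {0..L}) D \<and>
        (\<exists>I. finite I \<and> D = (\<Union>(a,b)\<in>I. {a<..<b}) \<inter> {0..L})) \<and>
     (\<forall>A B. openin (top_of_set {0..L}) A \<longrightarrow> openin (top_of_set {0..L}) B \<longrightarrow>
        compact (closure A) \<longrightarrow> closure A \<subseteq> B \<longrightarrow>
        (\<exists>D\<in>\<D>. closure A \<subseteq> D \<and> closure D \<subseteq> B))"

end

theory Submission
  imports Defs
begin
lemma diag_seq:
  assumes ev: "\<And>k. eventually (\<lambda>n. Q k n) sequentially"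
  shows "\<exists>\<kappa>::nat\<Rightarrow>nat. (\<forall>j. eventually (\<lambda>n. j \<le> \<kappa> n) sequentially) \<and>
            eventually (\<lambda>n. Q (\<kappa> n) n) sequentially"
proof -
  have "\<forall>k. \<exists>N. \<forall>n\<ge>N. Q k n" using ev by (simp add: eventually_sequentially)
  then obtain N where N: "\<And>k n. n \<ge> N k \<Longrightarrow> Q k n" by metis
  define M where "M k = Max (N ` {..k})" for k
  have NM: "N k \<le> M k" for k unfolding M_def by (intro Max_ge) auto
  have Mmono: "j \<le> k \<Longrightarrow> M j \<le> M k" for j k
    unfolding M_def by (intro Max_mono) auto
  define \<kappa> where "\<kappa> n = Max ({k. k \<le> n \<and> M k \<le> n} \<union> {0})" for n
  have fin: "finite ({k. k \<le> n \<and> M k \<le> n} \<union> {0})" for n by auto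
  have 1: "\<forall>j. eventually (\<lambda>n. j \<le> \<kappa> n) sequentially"
  proof
    fix j
    show "eventually (\<lambda>n. j \<le> \<kappa> n) sequentially"
      unfolding eventually_sequentially
    proof (intro exI allI impI)
      fix n assume "max j (M j) \<le> n"
      then have "j \<in> {k. k \<le> n \<and> M k \<le> n} \<union> {0}" by auto
      then show "j \<le> \<kappa> n" unfolding \<kappa>_def using fin by (intro Max_ge) auto
    qed
  qed
  have 2: "eventually (\<lambda>n. Q (\<kappa> n) n) sequentially"
    unfolding eventually_sequentially
  proof (intro exI allI impI)
    fix n assume n: "M 0 \<le> n"
    have "\<kappa> n \<in> {k. k \<le> n \<and> M k \<le> n} \<union> {0}"
      unfolding \<kappa>_def using fin by (intro Max_in) auto
    then have "M (\<kappa> n) \<le> n" using n by auto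
    then show "Q (\<kappa> n) n" using NM[of "\<kappa> n"] by (intro N) simp
  qed
  show ?thesis using 1 2 by blast
qed
lemma inv_suc_ennreal: "(\<lambda>j. ennreal (1 / real (Suc j))) \<longlonglongrightarrow> 0"
proof -
  have "(\<lambda>j. 1 / real (Suc j)) \<longlonglongrightarrow> 0"
    using LIMSEQ_Suc[OF lim_1_over_n] by simp
  then show ?thesis using tendsto_ennrealI by fastforce
qed

lemma diag_to0:
  fixes a :: "nat \<Rightarrow> ennreal" and \<kappa> :: "nat \<Rightarrow> nat"
  assumes k: "\<forall>j. eventually (\<lambda>n. j \<le> \<kappa> n) sequentially"
    and b: "eventually (\<lambda>n. a n < ennreal (1 / real (Suc (\<kappa> n)))) sequentially"
  shows "a \<longlonglongrightarrow> 0"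
proof (rule order_tendstoI)
  fix y :: ennreal assume "y < 0" then show "eventually (\<lambda>n. y < a n) sequentially" by simp
next
  fix e :: ennreal assume "0 < e"
  from order_tendstoD(2)[OF inv_suc_ennreal this]
  obtain j where j: "ennreal (1 / real (Suc j)) < e"
    by (auto simp: eventually_sequentially)
  show "eventually (\<lambda>n. a n < e) sequentially"
    using k[rule_format, of j] b
  proof eventually_elim
    case (elim n)
    have "ennreal (1 / real (Suc (\<kappa> n))) \<le> ennreal (1 / real (Suc j))"
      using elim(1) by (intro ennreal_leI) (simp add: frac_le)
    then show ?case using elim(2) j by (meson order.strict_trans order.strict_trans2)
  qed
qed

lemma diag_limsup:
  fixes E :: "nat \<Rightarrow> ennreal" and \<kappa> :: "nat \<Rightarrow> nat"
  assumes k: "\<forall>j. eventually (\<lambda>n. j \<le> \<kappa> n) sequentially"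
    and b: "eventually (\<lambda>n. E n < K + ennreal (1 / real (Suc (\<kappa> n)))) sequentially"
  shows "limsup E \<le> K"
proof -
  have le: "limsup E \<le> K + ennreal (1 / real (Suc j))" for j
  proof (rule Limsup_bounded)
    show "eventually (\<lambda>n. E n \<le> K + ennreal (1 / real (Suc j))) sequentially"
      using k[rule_format, of j] b
    proof eventually_elim
      case (elim n)
      have "ennreal (1 / real (Suc (\<kappa> n))) \<le> ennreal (1 / real (Suc j))"
        using elim(1) by (intro ennreal_leI) (simp add: frac_le)
      then show ?case using elim(2) by (meson add_left_mono less_imp_le order_trans)
    qed
  qed
  have "(\<lambda>j. K + ennreal (1 / real (Suc j))) \<longlonglongrightarrow> K + 0"
    by (intro tendsto_add tendsto_const inv_suc_ennreal)
  then show ?thesis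
    using le by (intro tendsto_lowerbound[of _ _ sequentially]) (auto intro: always_eventually)
qed
lemma full_in_D:
  assumes "dense_family L \<D>"
  shows "{0..L} \<in> \<D>"
proof -
  have "openin (top_of_set {0..L}) {0..L}" by (simp add: openin_subtopology_self)
  then obtain D where D: "D \<in> \<D>" "{0..L} \<subseteq> D" "closure D \<subseteq> {0..L}"
    using assms unfolding dense_family_def by (metis closure_closed closed_atLeastAtMost compact_Icc order_refl)
  then have "D = {0..L}" using closure_subset[of D] by blast
  then show ?thesis using D by simp
qed

lemma scale23_zero: "scale23 h 0 = 0"
  unfolding scale23_def by (simp add: vec_eq_iff forall_3 vector_def)

lemma zero_adm: "adm_seq \<omega> S h (\<lambda>n x. 0) (\<lambda>n x. 0)"
  unfolding adm_seq_def W12_def L2_def by (simp add: scale23_zero)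

theorem lemma2p17:
  fixes L \<eta>1 \<eta>2 \<rho> :: real
    and \<omega> :: "(real^2) set"
    and W :: "real \<Rightarrow> real^3 \<Rightarrow> real^3^3 \<Rightarrow> ennreal"
    and \<D> :: "real set set"
    and h :: "nat \<Rightarrow> real"
  assumes "L > 0"
    and "bounded \<omega>" "open \<omega>" "connected \<omega>" "lipschitz_boundary \<omega>"
    and "integral\<^sup>L (lebesgue_on \<omega>) (\<lambda>y. y $ 1) = 0"
    and "integral\<^sup>L (lebesgue_on \<omega>) (\<lambda>y. y $ 2) = 0"
    and "integral\<^sup>L (lebesgue_on \<omega>) (\<lambda>y. y $ 1 * y $ 2) = 0"
    and "0 < \<eta>1" "\<eta>1 \<le> \<eta>2" "0 < \<rho>"
    and "admissible_material \<eta>1 \<eta>2 \<rho> (cyl {0..L} \<omega>) W"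
    and "dense_family L \<D>"
    and "decseq h" "\<And>n. h n > 0" "h \<longlonglongrightarrow> 0"
    and A: "\<And>m D. L2 (cyl {0..L} \<omega>) m \<Longrightarrow> D \<in> \<D> \<Longrightarrow> Kplus W \<omega> h m D = Kminus W \<omega> h m D"
  shows "\<exists>\<sigma>::nat \<Rightarrow> nat. strict_mono \<sigma> \<and>
     (\<forall>m. L2 (cyl {0..L} \<omega>) m \<longrightarrow>
        (\<exists>\<theta> D\<theta>. adm_seq \<omega> {0..L} (h \<circ> \<sigma>) \<theta> D\<theta> \<and>
           (\<lambda>n. energy W \<omega> {0..L} ((h \<circ> \<sigma>) n) m (D\<theta> n)) \<longlonglongrightarrow> Kminus W \<omega> h m {0..L}))"
proof (rule exI[of _ id], intro conjI allI impI)
  show "strict_mono (id :: nat \<Rightarrow> nat)" by (simp add: strict_mono_def)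
  fix m :: "real^3 \<Rightarrow> real^3" assume m: "L2 (cyl {0..L} \<omega>) m"
  define S where "S = {(\<psi>, D\<psi>). adm_seq \<omega> {0..L} h \<psi> D\<psi>}"
  define E where "E p n = energy W \<omega> {0..L} (h n) m (snd p n)" for p :: "(nat \<Rightarrow> real^3 \<Rightarrow> real^3) \<times> (nat \<Rightarrow> real^3 \<Rightarrow> real^3^3)" and n
  define K where "K = Kminus W \<omega> h m {0..L}"
  have Km: "K = (INF p\<in>S. liminf (E p))" unfolding K_def Kminus_def S_def E_def by simp
  have Kp: "K = (INF p\<in>S. limsup (E p))"
    using A[OF m full_in_D[OF \<open>dense_family L \<D>\<close>]]
    unfolding K_def Kplus_def S_def E_def by simp
  have conv: "E p \<longlonglongrightarrow> K" if "p \<in> S" "limsup (E p) \<le> K" for p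
  proof -
    have "K \<le> liminf (E p)" unfolding Km using that(1) by (rule INF_lower)
    moreover have "liminf (E p) \<le> limsup (E p)" by (rule Liminf_le_Limsup) simp
    ultimately show ?thesis using that(2)
      by (intro Liminf_eq_Limsup) (auto intro: order.antisym)
  qed
  have main: "\<exists>\<theta> D\<theta>. adm_seq \<omega> {0..L} (h \<circ> id) \<theta> D\<theta> \<and>
           (\<lambda>n. energy W \<omega> {0..L} ((h \<circ> id) n) m (D\<theta> n)) \<longlonglongrightarrow> K"
  proof (cases "K = \<infinity>")
    case True
    let ?p = "((\<lambda>n x. 0) :: nat \<Rightarrow> real^3 \<Rightarrow> real^3, (\<lambda>n x. 0) :: nat \<Rightarrow> real^3 \<Rightarrow> real^3^3)"
    have pS: "?p \<in> S" unfolding S_def using zero_adm by simp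
    have "E ?p \<longlonglongrightarrow> K" using True by (intro conv[OF pS]) simp
    then show ?thesis using zero_adm[of \<omega> "{0..L}" h] unfolding E_def by auto
  next
    case False
    have "\<forall>k. \<exists>p\<in>S. limsup (E p) < K + ennreal (1 / real (Suc k))"
    proof
      fix k
      have "K < K + ennreal (1 / real (Suc k))" using False by (cases K) auto
      then show "\<exists>p\<in>S. limsup (E p) < K + ennreal (1 / real (Suc k))"
        using Kp by (simp add: INF_less_iff)
    qed
    then obtain P where P: "\<And>k. P k \<in> S" "\<And>k. limsup (E (P k)) < K + ennreal (1 / real (Suc k))"
      by metis
    define a where "a k n = (\<integral>\<^sup>+ x \<in> cyl {0..L} \<omega>. ennreal ((norm (scale23 (h n) (fst (P k) n x)))\<^sup>2) \<partial>lebesgue)" for k n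
    define b where "b k n = (\<integral>\<^sup>+ t \<in> {0..L}. ennreal ((integral\<^sup>L (lebesgue_on \<omega>) (\<lambda>y. y $ 2 * fst (P k) n (pt3 t y) $ 2))\<^sup>2) \<partial>lebesgue)" for k n
    have adm: "adm_seq \<omega> {0..L} h (fst (P k)) (snd (P k))" for k
      using P(1)[of k] unfolding S_def by (auto simp: case_prod_beta)
    have evk: "eventually (\<lambda>n. a k n < ennreal (1 / real (Suc k)) \<and> b k n < ennreal (1 / real (Suc k))
            \<and> E (P k) n < K + ennreal (1 / real (Suc k))) sequentially" for k
    proof -
      have pos: "0 < ennreal (1 / real (Suc k))" by simp
      have la: "a k \<longlonglongrightarrow> 0" and lb: "b k \<longlonglongrightarrow> 0"
        using adm[of k] unfolding adm_seq_def a_def b_def by auto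
      show ?thesis
        using order_tendstoD(2)[OF la pos] order_tendstoD(2)[OF lb pos] Limsup_lessD[OF P(2)[of k]]
        by eventually_elim auto
    qed
    from diag_seq[where Q="\<lambda>k n. a k n < ennreal (1 / real (Suc k)) \<and> b k n < ennreal (1 / real (Suc k))
            \<and> E (P k) n < K + ennreal (1 / real (Suc k))", OF evk] obtain \<kappa> where \<kappa>: "\<forall>j. eventually (\<lambda>n. j \<le> \<kappa> n) sequentially"
      and ev: "eventually (\<lambda>n. a (\<kappa> n) n < ennreal (1 / real (Suc (\<kappa> n))) \<and> b (\<kappa> n) n < ennreal (1 / real (Suc (\<kappa> n)))
            \<and> E (P (\<kappa> n)) n < K + ennreal (1 / real (Suc (\<kappa> n)))) sequentially"
      by blast
    define \<theta> where "\<theta> n = fst (P (\<kappa> n)) n" for n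
    define D\<theta> where "D\<theta> n = snd (P (\<kappa> n)) n" for n
    have "(\<lambda>n. a (\<kappa> n) n) \<longlonglongrightarrow> 0"
      using ev by (intro diag_to0[OF \<kappa>]) (auto elim: eventually_mono)
    moreover have "(\<lambda>n. b (\<kappa> n) n) \<longlonglongrightarrow> 0"
      using ev by (intro diag_to0[OF \<kappa>]) (auto elim: eventually_mono)
    moreover have "W12 (cyl {0..L} \<omega>) (\<theta> n) (D\<theta> n)" for n
      using adm[of "\<kappa> n"] unfolding adm_seq_def \<theta>_def D\<theta>_def by auto
    ultimately have admd: "adm_seq \<omega> {0..L} h \<theta> D\<theta>"
      unfolding adm_seq_def a_def b_def \<theta>_def by auto
    have pS: "(\<theta>, D\<theta>) \<in> S" unfolding S_def using admd by simp
    have EE: "E (\<theta>, D\<theta>) n = E (P (\<kappa> n)) n" for n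
      unfolding E_def D\<theta>_def by simp
    have "limsup (E (\<theta>, D\<theta>)) \<le> K"
      unfolding EE using ev by (intro diag_limsup[OF \<kappa>]) (auto elim: eventually_mono)
    from conv[OF pS this] have "E (\<theta>, D\<theta>) \<longlonglongrightarrow> K" .
    then show ?thesis using admd unfolding E_def by auto
  qed
  then show "\<exists>\<theta> D\<theta>. adm_seq \<omega> {0..L} (h \<circ> id) \<theta> D\<theta> \<and>
           (\<lambda>n. energy W \<omega> {0..L} ((h \<circ> id) n) m (D\<theta> n)) \<longlonglongrightarrow> Kminus W \<omega> h m {0..L}"
    unfolding K_def .
qed

end
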